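(* Let $V$ be a complex vector space of finite dimension $N$, let $(R,F)$ be a couple of compatible braidings on $V\otimes V$ with $F$ an involutive symmetry. Let $r(u,v)$ be either the braided rational $r$-matrix $r(u,v)=\frac{F}{u-v}$, or the braided trigonometric $r$-matrix $r(u,v)=\frac{F\,u}{u-v}-\frac{r}{2}$, where in the latter case $R=R(q)$ is a family of Hecke symmetries analytic in $q$ near $1$, compatible with $F$ for each $q$, with $R(1)=F$, and $r$ is defined by $R(q)F=I+h\,r+O(h^2)$, $q=e^h$. Then for any $N\times N$ matrix $A$ and any pairwise distinct positive integers $i,j,k$, $$ r_{\overline{ij}}(u,v)\,A_{\overline k}=A_{\overline k}\,r_{\overline{ij}}(u,v).$$
   Context: A braiding is an invertible $R\in\mathrm{End}(V\otimes V)$ with $(R\otimes I)(I\otimes R)(R\otimes I)=(I\otimes R)(R\otimes I)(I\otimes R)$; involutive symmetry: $R^2=I$; Hecke symmetry: $(R-qI)(R+q^{-1}I)=0$, $q\ne\pm1$. $X_{k,k+1}$ is $X$ acting on factors $k,k+1$ of $V^{\otimes n}$; $A_1=A\otimes I\otimes\cdots\otimes I$. Compatibility: $R_{12}F_{23}F_{12}=F_{23}F_{12}R_{23}$, $R_{23}F_{12}F_{23}=F_{12}F_{23}R_{12}$. Overlined indices: $A_{\overline 1}=A_1$, $A_{\overline{k+1}}=F_{k,k+1}A_{\overline k}F_{k,k+1}^{-1}$; for $X\in\mathrm{End}(V\otimes V)$ and $k<l$, $X_{\overline{kl}}=(F_{k-1,k}\cdots F_{12})(F_{l-1,l}\cdots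 F_{23})X_{12}(F_{23}^{-1}\cdots F_{l-1,l}^{-1})(F_{12}^{-1}\cdots F_{k-1,k}^{-1})$ and $X_{\overline{lk}}:=(FXF)_{\overline{kl}}$; for parameter-dependent $X(u,v)$ this is applied for fixed $(u,v)$. *)

theory Defs
  imports "HOL-Analysis.Analysis" "HOL-Library.Landau_Symbols"
begin

text \<open>V = C^N with its standard basis.  An operator on V^(tensor n) is given by its
matrix entries indexed by multi-indices: lists of length n with entries < N.
Only entries at valid multi-indices matter; equality of operators is checked there.\<close>

type_synonym op = "nat list \<Rightarrow> nat list \<Rightarrow> complex"

definition midx :: "nat \<Rightarrow> nat \<Rightarrow> nat list set" where
  "midx N n = {xs. length xs = n \<and> (\<forall>x\<in>set xs. x < N)}"

definition opeq :: "nat \<Rightarrow> nat \<Rightarrow> op \<Rightarrow> op \<Rightarrow> bool" where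
  "opeq N n X Y \<longleftrightarrow> (\<forall>a\<in>midx N n. \<forall>b\<in>midx N n. X a b = Y a b)"

definition opmul :: "nat \<Rightarrow> nat \<Rightarrow> op \<Rightarrow> op \<Rightarrow> op" where
  "opmul N n X Y = (\<lambda>a c. \<Sum>b\<in>midx N n. X a b * Y b c)"

definition opid :: "nat \<Rightarrow> nat \<Rightarrow> op" where
  "opid N n = (\<lambda>a b. if a \<in> midx N n \<and> a = b then 1 else 0)"

definition opadd :: "op \<Rightarrow> op \<Rightarrow> op" where
  "opadd X Y = (\<lambda>a b. X a b + Y a b)"

definition opsmul :: "complex \<Rightarrow> op \<Rightarrow> op" where
  "opsmul c X = (\<lambda>a b. c * X a b)"

definition emb1 :: "nat \<Rightarrow> nat \<Rightarrow> (nat \<Rightarrow> nat \<Rightarrow> complex) \<Rightarrow> op" where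
  "emb1 N n A = (\<lambda>a b. if a \<in> midx N n \<and> b \<in> midx N n \<and> (\<forall>m. 1 \<le> m \<and> m < n \<longrightarrow> a!m = b!m)
      then A (a!0) (b!0) else 0)"

text \<open>X_{k,k+1}: X \<in> End(V\<otimes>V) acting on factors k, k+1 (1-based) of V^(tensor n).\<close>
definition emb2 :: "nat \<Rightarrow> nat \<Rightarrow> nat \<Rightarrow> op \<Rightarrow> op" where
  "emb2 N n k X = (\<lambda>a b. if a \<in> midx N n \<and> b \<in> midx N n \<and>
        (\<forall>m<n. m \<noteq> k - 1 \<and> m \<noteq> k \<longrightarrow> a!m = b!m)
      then X [a!(k-1), a!k] [b!(k-1), b!k] else 0)"

definition braiding :: "nat \<Rightarrow> op \<Rightarrow> bool" where
  "braiding N R \<longleftrightarrow>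
     (\<exists>S. opeq N 2 (opmul N 2 R S) (opid N 2) \<and> opeq N 2 (opmul N 2 S R) (opid N 2)) \<and>
     opeq N 3 (opmul N 3 (opmul N 3 (emb2 N 3 1 R) (emb2 N 3 2 R)) (emb2 N 3 1 R))
              (opmul N 3 (opmul N 3 (emb2 N 3 2 R) (emb2 N 3 1 R)) (emb2 N 3 2 R))"

definition involutive_symmetry :: "nat \<Rightarrow> op \<Rightarrow> bool" where
  "involutive_symmetry N R \<longleftrightarrow> braiding N R \<and> opeq N 2 (opmul N 2 R R) (opid N 2)"

definition hecke_symmetry :: "nat \<Rightarrow> complex \<Rightarrow> op \<Rightarrow> bool" where
  "hecke_symmetry N q R \<longleftrightarrow> braiding N R \<and> q \<noteq> 1 \<and> q \<noteq> -1 \<and>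
     opeq N 2 (opmul N 2 (opadd R (opsmul (-q) (opid N 2))) (opadd R (opsmul (inverse q) (opid N 2))))
              (\<lambda>a b. 0)"

definition compatible :: "nat \<Rightarrow> op \<Rightarrow> op \<Rightarrow> bool" where
  "compatible N R F \<longleftrightarrow>
     opeq N 3 (opmul N 3 (opmul N 3 (emb2 N 3 1 R) (emb2 N 3 2 F)) (emb2 N 3 1 F))
              (opmul N 3 (opmul N 3 (emb2 N 3 2 F) (emb2 N 3 1 F)) (emb2 N 3 2 R)) \<and>
     opeq N 3 (opmul N 3 (opmul N 3 (emb2 N 3 2 R) (emb2 N 3 1 F)) (emb2 N 3 2 F))
              (opmul N 3 (opmul N 3 (emb2 N 3 1 F) (emb2 N 3 2 F)) (emb2 N 3 1 R))"

text \<open>Overlined single index: abar m = A_{overline(m+1)}; F^{-1} = F since F is involutive.\<close>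
primrec abar :: "nat \<Rightarrow> nat \<Rightarrow> op \<Rightarrow> (nat \<Rightarrow> nat \<Rightarrow> complex) \<Rightarrow> nat \<Rightarrow> op" where
  "abar N n F A 0 = emb1 N n A"
| "abar N n F A (Suc m) =
     opmul N n (opmul N n (emb2 N n (m+1) F) (abar N n F A m)) (emb2 N n (m+1) F)"

definition ovl1 :: "nat \<Rightarrow> nat \<Rightarrow> op \<Rightarrow> (nat \<Rightarrow> nat \<Rightarrow> complex) \<Rightarrow> nat \<Rightarrow> op" where
  "ovl1 N n F A k = abar N n F A (k - 1)"

text \<open>pl m = F_{m,m+1} ... F_{12} (i.e. the chain for k = m+1), pr m its inverse F_{12}...F_{m,m+1};
  ql m = F_{m+1,m+2} ... F_{23} (chain for l = m+2), qr m = F_{23} ... F_{m+1,m+2}.\<close>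
primrec pl :: "nat \<Rightarrow> nat \<Rightarrow> op \<Rightarrow> nat \<Rightarrow> op" where
  "pl N n F 0 = opid N n"
| "pl N n F (Suc m) = opmul N n (emb2 N n (m+1) F) (pl N n F m)"

primrec pr :: "nat \<Rightarrow> nat \<Rightarrow> op \<Rightarrow> nat \<Rightarrow> op" where
  "pr N n F 0 = opid N n"
| "pr N n F (Suc m) = opmul N n (pr N n F m) (emb2 N n (m+1) F)"

primrec ql :: "nat \<Rightarrow> nat \<Rightarrow> op \<Rightarrow> nat \<Rightarrow> op" where
  "ql N n F 0 = opid N n"
| "ql N n F (Suc m) = opmul N n (emb2 N n (m+2) F) (ql N n F m)"

primrec qr :: "nat \<Rightarrow> nat \<Rightarrow> op \<Rightarrow> nat \<Rightarrow> op" where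
  "qr N n F 0 = opid N n"
| "qr N n F (Suc m) = opmul N n (qr N n F m) (emb2 N n (m+2) F)"

definition xbar :: "nat \<Rightarrow> nat \<Rightarrow> op \<Rightarrow> op \<Rightarrow> nat \<Rightarrow> nat \<Rightarrow> op" where
  "xbar N n F X k l =
     opmul N n (opmul N n (opmul N n (opmul N n (pl N n F (k - 1)) (ql N n F (l - 2)))
        (emb2 N n 1 X)) (qr N n F (l - 2))) (pr N n F (k - 1))"

definition ovl2 :: "nat \<Rightarrow> nat \<Rightarrow> op \<Rightarrow> op \<Rightarrow> nat \<Rightarrow> nat \<Rightarrow> op" where
  "ovl2 N n F X i j = (if i < j then xbar N n F X i j
                       else xbar N n F (opmul N 2 (opmul N 2 F X) F) j i)"

end

theory Submission
  imports Defs
begin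
definition agr :: "nat \<Rightarrow> nat \<Rightarrow> nat \<Rightarrow> nat list \<Rightarrow> nat list \<Rightarrow> bool" where
  "agr n p w a b \<longleftrightarrow> (\<forall>m<n. (m < p \<or> p + w \<le> m) \<longrightarrow> a!m = b!m)"

definition embw :: "nat \<Rightarrow> nat \<Rightarrow> nat \<Rightarrow> nat \<Rightarrow> op \<Rightarrow> op" where
  "embw N n p w Y = (\<lambda>a b. if a \<in> midx N n \<and> b \<in> midx N n \<and> agr n p w a b
      then Y (take w (drop p a)) (take w (drop p b)) else 0)"

definition spl :: "nat \<Rightarrow> nat \<Rightarrow> nat list \<Rightarrow> nat list \<Rightarrow> nat list" where
  "spl p w a m = take p a @ m @ drop (p + w) a"

lemma finite_midx[simp]: "finite (midx N n)"
proof -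
  have "midx N n = {xs. set xs \<subseteq> {..<N} \<and> length xs = n}"
    unfolding midx_def by auto
  then show ?thesis using finite_lists_length_eq[of "{..<N}" n] by simp
qed

lemma midx_len: "a \<in> midx N n \<Longrightarrow> length a = n"
  by (simp add: midx_def)

lemma midx_nth: "a \<in> midx N n \<Longrightarrow> m < n \<Longrightarrow> a!m < N"
  by (auto simp: midx_def)

lemma midx_iff: "a \<in> midx N n \<longleftrightarrow> length a = n \<and> (\<forall>m<n. a!m < N)"
  unfolding midx_def by (auto simp: in_set_conv_nth) (metis nth_mem)

lemma sub_midx: "a \<in> midx N n \<Longrightarrow> p + w \<le> n \<Longrightarrow> take w (drop p a) \<in> midx N w"
  by (auto simp: midx_iff)

lemma take_drop_nth: "p \<le> i \<Longrightarrow> i < p + w \<Longrightarrow> i < length c \<Longrightarrow> take w (drop p c) ! (i - p) = c ! i"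
  by (subst nth_take) (auto simp: nth_drop)

lemma splice_len: "length a = n \<Longrightarrow> length m = w \<Longrightarrow> p + w \<le> n \<Longrightarrow> length (spl p w a m) = n"
  by (simp add: spl_def)

lemma splice_nth: "length a = n \<Longrightarrow> length m = w \<Longrightarrow> p + w \<le> n \<Longrightarrow> i < n \<Longrightarrow>
   spl p w a m ! i = (if i < p then a!i else if i < p + w then m!(i-p) else a!i)"
  by (auto simp: spl_def nth_append min_def)

lemma splice_midx: "a \<in> midx N n \<Longrightarrow> m \<in> midx N w \<Longrightarrow> p + w \<le> n \<Longrightarrow> spl p w a m \<in> midx N n"
  unfolding midx_iff by (auto simp: splice_len splice_nth)

lemma splice_sub: "length a = n \<Longrightarrow> length m = w \<Longrightarrow> p + w \<le> n \<Longrightarrow> take w (drop p (spl p w a m)) = m"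
  by (simp add: spl_def)

lemma splice_agr: "length a = n \<Longrightarrow> length m = w \<Longrightarrow> p + w \<le> n \<Longrightarrow> agr n p w a (spl p w a m)"
  by (auto simp: agr_def splice_nth)

lemma agr_splice_eq: assumes "b \<in> midx N n" "a \<in> midx N n" "p + w \<le> n" "agr n p w a b"
  shows "b = spl p w a (take w (drop p b))"
proof (rule nth_equalityI)
  show "length b = length (spl p w a (take w (drop p b)))"
    using assms by (simp add: midx_len splice_len)
  fix i assume "i < length b"
  then show "b ! i = spl p w a (take w (drop p b)) ! i"
    using assms by (auto simp: midx_len splice_nth agr_def)
qed

lemma sum_agr:
  assumes a: "a \<in> midx N n" and pw: "p + w \<le> n"
  shows "(\<Sum>b\<in>midx N n. if agr n p w a b then g b else 0) = (\<Sum>m\<in>midx N w. g (spl p w a m))"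
proof -
  have "(\<Sum>b\<in>midx N n. if agr n p w a b then g b else 0) = (\<Sum>b\<in>{b\<in>midx N n. agr n p w a b}. g b)"
    by (simp add: sum.inter_filter)
  also have "{b\<in>midx N n. agr n p w a b} = spl p w a ` midx N w"
  proof
    show "{b \<in> midx N n. agr n p w a b} \<subseteq> spl p w a ` midx N w"
    proof
      fix b assume "b \<in> {b \<in> midx N n. agr n p w a b}"
      then have b: "b \<in> midx N n" "agr n p w a b" by auto
      then have "b = spl p w a (take w (drop p b))" using agr_splice_eq a pw by blast
      moreover have "take w (drop p b) \<in> midx N w" using sub_midx b pw by blast
      ultimately show "b \<in> spl p w a ` midx N w" by blast
    qed
    show "spl p w a ` midx N w \<subseteq> {b \<in> midx N n. agr n p w a b}"
      using a pw by (auto simp: splice_midx splice_agr midx_len)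
  qed
  also have "(\<Sum>b\<in>spl p w a ` midx N w. g b) = (\<Sum>m\<in>midx N w. g (spl p w a m))"
  proof (rule sum.reindex[unfolded comp_def])
    show "inj_on (spl p w a) (midx N w)"
      by (rule inj_onI) (metis a pw midx_len splice_sub)
  qed
  finally show ?thesis .
qed

definition clean :: "nat \<Rightarrow> nat \<Rightarrow> op \<Rightarrow> bool" where
  "clean N n X \<longleftrightarrow> (\<forall>a b. (a \<notin> midx N n \<or> b \<notin> midx N n) \<longrightarrow> X a b = 0)"

lemma embw_clean[simp]: "clean N n (embw N n p w X)"
  by (simp add: clean_def embw_def)

lemma opmul_clean[simp]: assumes "clean N n X" "clean N n Y" shows "clean N n (opmul N n X Y)"
  unfolding clean_def
proof (intro allI impI)
  fix a c assume h: "a \<notin> midx N n \<or> c \<notin> midx N n"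
  have z: "\<And>b. X a b * Y b c = 0" using h assms unfolding clean_def by auto
  show "opmul N n X Y a c = 0" unfolding opmul_def by (intro sum.neutral ballI z)
qed

lemma opid_clean[simp]: "clean N n (opid N n)"
  by (simp add: clean_def opid_def)

lemma emb2_clean[simp]: "clean N n (emb2 N n k X)"
  by (simp add: clean_def emb2_def)

lemma emb1_clean[simp]: "clean N n (emb1 N n A)"
  by (simp add: clean_def emb1_def)

lemma opadd_clean[simp]: "clean N n X \<Longrightarrow> clean N n Y \<Longrightarrow> clean N n (opadd X Y)"
  by (simp add: clean_def opadd_def)

lemma opsmul_clean[simp]: "clean N n X \<Longrightarrow> clean N n (opsmul c X)"
  by (simp add: clean_def opsmul_def)

lemma opmul_assoc: "opmul N n (opmul N n X Y) Z = opmul N n X (opmul N n Y Z)"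
  unfolding opmul_def
  by (auto simp: sum_distrib_left sum_distrib_right mult.assoc intro!: ext sum.swap)

lemma opid_left[simp]: assumes "clean N n X" shows "opmul N n (opid N n) X = X"
proof (intro ext)
  fix a c
  have "opmul N n (opid N n) X a c = (\<Sum>b\<in>midx N n. if b = a then (if a \<in> midx N n then X a c else 0) else 0)"
    unfolding opmul_def opid_def by (rule sum.cong) auto
  also have "\<dots> = X a c" using assms by (simp add: clean_def)
  finally show "opmul N n (opid N n) X a c = X a c" .
qed

lemma opid_right[simp]: assumes "clean N n X" shows "opmul N n X (opid N n) = X"
proof (intro ext)
  fix a c
  have "opmul N n X (opid N n) a c = (\<Sum>b\<in>midx N n. if b = c then (if c \<in> midx N n then X a c else 0) else 0)"
    unfolding opmul_def opid_def by (rule sum.cong) auto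
  also have "\<dots> = X a c" using assms by (simp add: clean_def)
  finally show "opmul N n X (opid N n) a c = X a c" .
qed

lemma clean_opeq: "clean N n X \<Longrightarrow> clean N n Y \<Longrightarrow> opeq N n X Y \<Longrightarrow> X = Y"
  unfolding clean_def opeq_def by (intro ext) metis

lemma eq_opeq: "X = Y \<Longrightarrow> opeq N n X Y"
  by (simp add: opeq_def)

lemma agr_splice_iff: "length a = n \<Longrightarrow> length m = w \<Longrightarrow> p + w \<le> n \<Longrightarrow>
   agr n p w (spl p w a m) c \<longleftrightarrow> agr n p w a c"
  by (auto simp: agr_def splice_nth)

lemma embw_mult:
  assumes pw: "p + w \<le> n"
  shows "embw N n p w (opmul N w X Y) = opmul N n (embw N n p w X) (embw N n p w Y)"
proof (intro ext)
  fix a c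
  show "embw N n p w (opmul N w X Y) a c = opmul N n (embw N n p w X) (embw N n p w Y) a c"
  proof (cases "a \<in> midx N n")
    case False then show ?thesis by (simp add: embw_def opmul_def)
  next
    case a: True
    have "opmul N n (embw N n p w X) (embw N n p w Y) a c
      = (\<Sum>b\<in>midx N n. if agr n p w a b then X (take w (drop p a)) (take w (drop p b)) * embw N n p w Y b c else 0)"
      unfolding opmul_def by (rule sum.cong) (auto simp: embw_def a)
    also have "\<dots> = (\<Sum>m\<in>midx N w. X (take w (drop p a)) (take w (drop p (spl p w a m))) * embw N n p w Y (spl p w a m) c)"
      by (rule sum_agr[OF a pw])
    also have "\<dots> = (\<Sum>m\<in>midx N w. X (take w (drop p a)) m * embw N n p w Y (spl p w a m) c)"
      using a pw by (intro sum.cong) (auto simp: splice_sub midx_len)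
    also have "\<dots> = (\<Sum>m\<in>midx N w. if c \<in> midx N n \<and> agr n p w a c then X (take w (drop p a)) m * Y m (take w (drop p c)) else 0)"
      using a pw by (auto simp: embw_def splice_midx agr_splice_iff splice_sub midx_len intro!: sum.cong)
    also have "\<dots> = embw N n p w (opmul N w X Y) a c"
      using a by (cases "c \<in> midx N n \<and> agr n p w a c") (auto simp: embw_def opmul_def)
    finally show ?thesis by simp
  qed
qed

lemma embw_cong: "opeq N w X Y \<Longrightarrow> p + w \<le> n \<Longrightarrow> embw N n p w X = embw N n p w Y"
  unfolding embw_def opeq_def by (auto intro!: ext simp: sub_midx)

definition jagr :: "nat \<Rightarrow> nat \<Rightarrow> nat \<Rightarrow> nat \<Rightarrow> nat \<Rightarrow> nat list \<Rightarrow> nat list \<Rightarrow> bool" where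
  "jagr n p w q v a c \<longleftrightarrow> (\<forall>i<n. (i < p \<or> p + w \<le> i) \<and> (i < q \<or> q + v \<le> i) \<longrightarrow> a!i = c!i)"

lemma disj_sub:
  assumes "p + w \<le> q \<or> q + v \<le> p" "p + w \<le> n" "q + v \<le> n" "length a = n" "length m = w"
  shows "take v (drop q (spl p w a m)) = take v (drop q a)"
  using assms by (intro nth_equalityI) (auto simp: splice_nth splice_len)

lemma disj_agr:
  assumes d: "p + w \<le> q \<or> q + v \<le> p" and pw: "p + w \<le> n" and qv: "q + v \<le> n"
    and a: "length a = n" and m: "length m = w" and c: "length c = n"
  shows "agr n q v (spl p w a m) c \<longleftrightarrow> m = take w (drop p c) \<and> jagr n p w q v a c"
proof
  assume h: "agr n q v (spl p w a m) c"
  have "m = take w (drop p c)"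
  proof (rule nth_equalityI)
    show "length m = length (take w (drop p c))" using m c pw by simp
    fix i assume i: "i < length m"
    have pi: "p + i < n" using i m pw by simp
    have pq: "p + i < q \<or> q + v \<le> p + i" using d i m by auto
    have "spl p w a m ! (p + i) = c ! (p + i)"
      using h pi pq unfolding agr_def by blast
    then show "m ! i = take w (drop p c) ! i"
      using i m a c pw by (simp add: splice_nth)
  qed
  moreover have "jagr n p w q v a c"
    unfolding jagr_def
  proof (intro allI impI)
    fix i assume "i < n" "(i < p \<or> p + w \<le> i) \<and> (i < q \<or> q + v \<le> i)"
    then show "a ! i = c ! i" using h a m pw unfolding agr_def
      by (metis splice_nth not_le)
  qed
  ultimately show "m = take w (drop p c) \<and> jagr n p w q v a c" by blast
next
  assume h: "m = take w (drop p c) \<and> jagr n p w q v a c"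
  show "agr n q v (spl p w a m) c"
    unfolding agr_def
  proof (intro allI impI)
    fix i assume i: "i < n" "i < q \<or> q + v \<le> i"
    show "spl p w a m ! i = c ! i"
    proof (cases "p \<le> i \<and> i < p + w")
      case True then show ?thesis using h a m c pw i by (simp add: splice_nth take_drop_nth)
    next
      case False then show ?thesis using h a m c pw i by (auto simp: splice_nth jagr_def)
    qed
  qed
qed

lemma embw_disj_val:
  assumes d: "p + w \<le> q \<or> q + v \<le> p" and pw: "p + w \<le> n" and qv: "q + v \<le> n"
  shows "opmul N n (embw N n p w X) (embw N n q v Y) a c =
    (if a \<in> midx N n \<and> c \<in> midx N n \<and> jagr n p w q v a c then
       X (take w (drop p a)) (take w (drop p c)) * Y (take v (drop q a)) (take v (drop q c)) else 0)"
proof (cases "a \<in> midx N n")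
  case False then show ?thesis by (simp add: embw_def opmul_def)
next
  case a: True
  have "opmul N n (embw N n p w X) (embw N n q v Y) a c
      = (\<Sum>b\<in>midx N n. if agr n p w a b then X (take w (drop p a)) (take w (drop p b)) * embw N n q v Y b c else 0)"
    unfolding opmul_def by (rule sum.cong) (auto simp: embw_def a)
  also have "\<dots> = (\<Sum>m\<in>midx N w. X (take w (drop p a)) (take w (drop p (spl p w a m))) * embw N n q v Y (spl p w a m) c)"
    by (rule sum_agr[OF a pw])
  also have "\<dots> = (\<Sum>m\<in>midx N w. X (take w (drop p a)) m * embw N n q v Y (spl p w a m) c)"
    using a pw by (intro sum.cong) (auto simp: splice_sub midx_len)
  also have "\<dots> = (\<Sum>m\<in>midx N w. if c \<in> midx N n \<and> jagr n p w q v a c then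
      (if m = take w (drop p c) then X (take w (drop p a)) m * Y (take v (drop q a)) (take v (drop q c)) else 0) else 0)"
  proof (rule sum.cong)
    fix m assume m: "m \<in> midx N w"
    show "X (take w (drop p a)) m * embw N n q v Y (spl p w a m) c =
      (if c \<in> midx N n \<and> jagr n p w q v a c then
      (if m = take w (drop p c) then X (take w (drop p a)) m * Y (take v (drop q a)) (take v (drop q c)) else 0) else 0)"
    proof (cases "c \<in> midx N n")
      case c: True
      show ?thesis
        using disj_agr[OF d pw qv midx_len[OF a] midx_len[OF m] midx_len[OF c]]
          disj_sub[OF d pw qv midx_len[OF a] midx_len[OF m]] c splice_midx[OF a m pw]
        by (auto simp: embw_def)
    qed (simp add: embw_def)
  qed simp
  also have "\<dots> = (if a \<in> midx N n \<and> c \<in> midx N n \<and> jagr n p w q v a c then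
       X (take w (drop p a)) (take w (drop p c)) * Y (take v (drop q a)) (take v (drop q c)) else 0)"
    using a pw by (auto simp: sum.delta' sub_midx)
  finally show ?thesis .
qed

lemma jagr_sym: "jagr n p w q v a c = jagr n q v p w a c"
  unfolding jagr_def by auto

lemma embw_comm:
  assumes d: "p + w \<le> q \<or> q + v \<le> p" and pw: "p + w \<le> n" and qv: "q + v \<le> n"
  shows "opmul N n (embw N n p w X) (embw N n q v Y) = opmul N n (embw N n q v Y) (embw N n p w X)"
proof (intro ext)
  fix a c
  have d': "q + v \<le> p \<or> p + w \<le> q" using d by auto
  show "opmul N n (embw N n p w X) (embw N n q v Y) a c = opmul N n (embw N n q v Y) (embw N n p w X) a c"
    unfolding embw_disj_val[OF d pw qv] embw_disj_val[OF d' qv pw] jagr_sym[of n p w q v]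
    by (simp add: mult.commute)
qed

lemma embw_nest:
  assumes qv: "q + v \<le> w" and pw: "p + w \<le> n"
  shows "embw N n p w (embw N w q v X) = embw N n (p + q) v X"
proof (intro ext)
  fix a b
  show "embw N n p w (embw N w q v X) a b = embw N n (p + q) v X a b"
  proof (cases "a \<in> midx N n \<and> b \<in> midx N n")
    case True
    then have la: "length a = n" and lb: "length b = n" by (auto simp: midx_len)
    have e1: "take v (drop q (take w (drop p a))) = take v (drop (p+q) a)"
      using qv by (simp add: drop_take take_take min_def add.commute)
    have e2: "take v (drop q (take w (drop p b))) = take v (drop (p+q) b)"
      using qv by (simp add: drop_take take_take min_def add.commute)
    have e3: "(agr n p w a b \<and> agr w q v (take w (drop p a)) (take w (drop p b))) \<longleftrightarrow> agr n (p+q) v a b"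
    proof
      assume h: "agr n p w a b \<and> agr w q v (take w (drop p a)) (take w (drop p b))"
      show "agr n (p+q) v a b" unfolding agr_def
      proof (intro allI impI)
        fix i assume i: "i < n" "i < p + q \<or> p + q + v \<le> i"
        show "a ! i = b ! i"
        proof (cases "p \<le> i \<and> i < p + w")
          case True
          then have "take w (drop p a) ! (i - p) = take w (drop p b) ! (i - p)"
            using h i unfolding agr_def by auto
          then show ?thesis using True la lb pw i by (simp add: take_drop_nth)
        next
          case False then show ?thesis using h i unfolding agr_def by auto
        qed
      qed
    next
      assume h: "agr n (p+q) v a b"
      show "agr n p w a b \<and> agr w q v (take w (drop p a)) (take w (drop p b))"
        using h qv pw la lb unfolding agr_def by auto
    qed
    show ?thesis using True e1 e2 e3 pw qv by (auto simp: embw_def sub_midx)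
  qed (auto simp: embw_def)
qed

lemma emb2_embw: "1 \<le> k \<Longrightarrow> k < n \<Longrightarrow> emb2 N n k X = embw N n (k - 1) 2 X"
proof (intro ext)
  fix a b assume k: "1 \<le> k" "k < n"
  show "emb2 N n k X a b = embw N n (k - 1) 2 X a b"
  proof (cases "a \<in> midx N n \<and> b \<in> midx N n")
    case True
    then have la: "length a = n" and lb: "length b = n" by (auto simp: midx_len)
    have "take 2 (drop (k-1) a) = [a!(k-1), a!k]" "take 2 (drop (k-1) b) = [b!(k-1), b!k]"
      using k la lb by (auto intro!: nth_equalityI simp: nth_Cons split: nat.split)
    moreover have "(\<forall>m<n. m \<noteq> k - 1 \<and> m \<noteq> k \<longrightarrow> a!m = b!m) \<longleftrightarrow> agr n (k-1) 2 a b"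
    proof -
      have "\<forall>m. (m \<noteq> k - 1 \<and> m \<noteq> k) = (m < k - 1 \<or> k - 1 + 2 \<le> m)" using k by auto
      then show ?thesis unfolding agr_def by simp
    qed
    ultimately show ?thesis using True by (simp add: emb2_def embw_def)
  qed (auto simp: emb2_def embw_def)
qed

lemma emb1_embw: "1 \<le> n \<Longrightarrow> emb1 N n A = embw N n 0 1 (\<lambda>xs ys. A (hd xs) (hd ys))"
proof (intro ext)
  fix a b assume n: "1 \<le> n"
  show "emb1 N n A a b = embw N n 0 1 (\<lambda>xs ys. A (hd xs) (hd ys)) a b"
  proof (cases "a \<in> midx N n \<and> b \<in> midx N n")
    case True
    then have la: "length a = n" and lb: "length b = n" by (auto simp: midx_len)
    then have "a \<noteq> []" "b \<noteq> []" using n by auto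
    then have "hd (take 1 a) = a!0" "hd (take 1 b) = b!0"
      by (auto simp: hd_conv_nth)
    moreover have "(\<forall>m. 1 \<le> m \<and> m < n \<longrightarrow> a!m = b!m) \<longleftrightarrow> agr n 0 1 a b"
      unfolding agr_def by auto
    ultimately show ?thesis using True by (simp add: emb1_def embw_def)
  qed (auto simp: emb1_def embw_def)
qed

lemma embw_id: "p + w \<le> n \<Longrightarrow> embw N n p w (opid N w) = opid N n"
proof (intro ext)
  fix a b assume pw: "p + w \<le> n"
  show "embw N n p w (opid N w) a b = opid N n a b"
  proof (cases "a \<in> midx N n \<and> b \<in> midx N n")
    case True
    then have la: "length a = n" and lb: "length b = n" by (auto simp: midx_len)
    have "(agr n p w a b \<and> take w (drop p a) = take w (drop p b)) \<longleftrightarrow> a = b"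
    proof
      assume h: "agr n p w a b \<and> take w (drop p a) = take w (drop p b)"
      show "a = b"
      proof (rule nth_equalityI)
        show "length a = length b" using la lb by simp
        fix i assume i: "i < length a"
        show "a ! i = b ! i"
        proof (cases "p \<le> i \<and> i < p + w")
          case True
          then have "take w (drop p a) ! (i - p) = take w (drop p b) ! (i - p)" using h by simp
          then show ?thesis using True la lb pw i by (simp add: take_drop_nth)
        next
          case False then show ?thesis using h i la unfolding agr_def by auto
        qed
      qed
    qed (simp add: agr_def)
    then show ?thesis using True pw by (auto simp: embw_def opid_def sub_midx)
  qed (auto simp: embw_def opid_def)
qed

lemma embw_add: "embw N n p w (opadd X Y) = opadd (embw N n p w X) (embw N n p w Y)"
  by (auto simp: embw_def opadd_def intro!: ext)

lemma embw_smul: "embw N n p w (opsmul c X) = opsmul c (embw N n p w X)"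
  by (auto simp: embw_def opsmul_def intro!: ext)

lemma opmul_add_left: "opmul N n (opadd X Y) Z = opadd (opmul N n X Z) (opmul N n Y Z)"
  by (auto simp: opmul_def opadd_def distrib_right sum.distrib intro!: ext)

lemma opmul_add_right: "opmul N n Z (opadd X Y) = opadd (opmul N n Z X) (opmul N n Z Y)"
  by (auto simp: opmul_def opadd_def distrib_left sum.distrib intro!: ext)

lemma opmul_smul_left: "opmul N n (opsmul c X) Z = opsmul c (opmul N n X Z)"
  by (auto simp: opmul_def opsmul_def sum_distrib_left mult.assoc intro!: ext)

lemma opmul_smul_right: "opmul N n Z (opsmul c X) = opsmul c (opmul N n Z X)"
  by (auto simp: opmul_def opsmul_def sum_distrib_left mult.left_commute intro!: ext)

declare abar.simps(2)[simp del] pl.simps(2)[simp del] pr.simps(2)[simp del]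
  ql.simps(2)[simp del] qr.simps(2)[simp del]

lemma lift_e2: "1 \<le> i \<Longrightarrow> i \<le> 2 \<Longrightarrow> p + 3 \<le> n \<Longrightarrow> embw N n p 3 (emb2 N 3 i X) = embw N n (p + i - 1) 2 X"
  by (simp add: emb2_embw embw_nest)

lemma lift_prod3: "p + 3 \<le> n \<Longrightarrow> embw N n p 3 (opmul N 3 (opmul N 3 A B) C) =
   opmul N n (opmul N n (embw N n p 3 A) (embw N n p 3 B)) (embw N n p 3 C)"
  by (simp add: embw_mult)

lemma lift3:
  assumes "opeq N 3 (opmul N 3 (opmul N 3 (emb2 N 3 i1 X1) (emb2 N 3 i2 X2)) (emb2 N 3 i3 X3))
                    (opmul N 3 (opmul N 3 (emb2 N 3 j1 Y1) (emb2 N 3 j2 Y2)) (emb2 N 3 j3 Y3))"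
    and "i1 \<in> {1,2}" "i2 \<in> {1,2}" "i3 \<in> {1,2}" "j1 \<in> {1,2}" "j2 \<in> {1,2}" "j3 \<in> {1,2}"
    and p: "p + 3 \<le> n"
  shows "opmul N n (opmul N n (embw N n (p+i1-1) 2 X1) (embw N n (p+i2-1) 2 X2)) (embw N n (p+i3-1) 2 X3)
       = opmul N n (opmul N n (embw N n (p+j1-1) 2 Y1) (embw N n (p+j2-1) 2 Y2)) (embw N n (p+j3-1) 2 Y3)"
proof -
  have "embw N n p 3 (opmul N 3 (opmul N 3 (emb2 N 3 i1 X1) (emb2 N 3 i2 X2)) (emb2 N 3 i3 X3))
      = embw N n p 3 (opmul N 3 (opmul N 3 (emb2 N 3 j1 Y1) (emb2 N 3 j2 Y2)) (emb2 N 3 j3 Y3))"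
    using assms(1) p by (rule embw_cong)
  moreover have e: "\<And>i X. i \<in> {1,2} \<Longrightarrow> embw N n p 3 (emb2 N 3 i X) = embw N n (p+i-1) 2 X"
    using p lift_e2 by auto
  ultimately show ?thesis using assms(2-7) by (simp only: lift_prod3[OF p] e)
qed

locale alg =
  fixes N n :: nat and F :: op
  assumes Finv: "involutive_symmetry N F"
begin

abbreviation mm (infixr "\<diamondop>" 70) where "X \<diamondop> Y \<equiv> opmul N n X Y"
abbreviation I where "I \<equiv> opid N n"
definition f :: "nat \<Rightarrow> op" where "f p = embw N n p 2 F"

lemma f_clean[simp]: "clean N n (f p)" by (simp add: f_def)

lemma assoc[simp]: "(X \<diamondop> Y) \<diamondop> Z = X \<diamondop> (Y \<diamondop> Z)"
  by (rule opmul_assoc)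

lemma ff[simp]: "p + 2 \<le> n \<Longrightarrow> f p \<diamondop> f p = I"
proof -
  assume p: "p + 2 \<le> n"
  have "opeq N 2 (opmul N 2 F F) (opid N 2)" using Finv by (simp add: involutive_symmetry_def)
  then have "embw N n p 2 (opmul N 2 F F) = embw N n p 2 (opid N 2)" using p by (rule embw_cong)
  then show ?thesis using p by (simp add: embw_mult embw_id f_def)
qed

lemma ff_cancel[simp]: "p + 2 \<le> n \<Longrightarrow> clean N n X \<Longrightarrow> f p \<diamondop> (f p \<diamondop> X) = X"
  by (simp flip: assoc)

lemma braid: "p + 3 \<le> n \<Longrightarrow> f p \<diamondop> f (p+1) \<diamondop> f p = f (p+1) \<diamondop> f p \<diamondop> f (p+1)"
proof -
  assume p: "p + 3 \<le> n"
  have "opeq N 3 (opmul N 3 (opmul N 3 (emb2 N 3 1 F) (emb2 N 3 2 F)) (emb2 N 3 1 F))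
              (opmul N 3 (opmul N 3 (emb2 N 3 2 F) (emb2 N 3 1 F)) (emb2 N 3 2 F))"
    using Finv by (simp add: involutive_symmetry_def braiding_def)
  from lift3[OF this _ _ _ _ _ _ p] show ?thesis by (simp add: f_def)
qed

lemma braid_ctx: "p + 3 \<le> n \<Longrightarrow> f p \<diamondop> f (p+1) \<diamondop> f p \<diamondop> Z = f (p+1) \<diamondop> f p \<diamondop> f (p+1) \<diamondop> Z"
  using braid by (metis assoc)

lemma fcomm: "p + 2 \<le> q \<or> q + 2 \<le> p \<Longrightarrow> p + 2 \<le> n \<Longrightarrow> q + 2 \<le> n \<Longrightarrow> f p \<diamondop> f q = f q \<diamondop> f p"
  unfolding f_def by (rule embw_comm)

lemma comm_ctx: "X \<diamondop> Y = Y \<diamondop> X \<Longrightarrow> X \<diamondop> Y \<diamondop> Z = Y \<diamondop> X \<diamondop> Z"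
  by (metis assoc)

lemma emb2_f: "m + 2 \<le> n \<Longrightarrow> emb2 N n (Suc m) F = f m"
  by (simp add: emb2_embw f_def)

end

locale algA = alg +
  fixes A :: "nat \<Rightarrow> nat \<Rightarrow> complex"
begin

abbreviation B where "B m \<equiv> abar N n F A m"

lemma B_clean[simp]: "clean N n (B m)"
  by (induction m) (simp_all add: abar.simps)

lemma B_Suc: "m + 2 \<le> n \<Longrightarrow> B (Suc m) = f m \<diamondop> B m \<diamondop> f m"
  unfolding abar.simps(2) using emb2_f[of m] by (simp only: Suc_eq_plus1 assoc)

lemma fB_comm: "j + 2 \<le> n \<Longrightarrow> M < n \<Longrightarrow> j \<noteq> M \<Longrightarrow> j + 1 \<noteq> M \<Longrightarrow> f j \<diamondop> B M = B M \<diamondop> f j"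
proof (induction M arbitrary: j rule: less_induct)
  case (less M)
  show ?case
  proof (cases M)
    case 0
    then have "B M = embw N n 0 1 (\<lambda>xs ys. A (hd xs) (hd ys))" using less by (simp add: emb1_embw)
    then show ?thesis unfolding f_def using less 0 by (simp only:) (rule embw_comm, auto)
  next
    case (Suc M')
    have BM: "B M = f M' \<diamondop> B M' \<diamondop> f M'" using Suc less B_Suc by simp
    show ?thesis
    proof (cases "j + 1 = M'")
      case False
      have c1: "f j \<diamondop> f M' = f M' \<diamondop> f j" using less Suc False by (intro fcomm) auto
      have c2: "f j \<diamondop> B M' = B M' \<diamondop> f j" using less Suc False by (intro less.IH) auto
      have "f j \<diamondop> B M = f M' \<diamondop> f j \<diamondop> B M' \<diamondop> f M'" using c1 by (simp add: BM comm_ctx)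
      also have "\<dots> = f M' \<diamondop> B M' \<diamondop> f j \<diamondop> f M'" using c2 by (simp add: comm_ctx)
      also have "\<dots> = f M' \<diamondop> B M' \<diamondop> f M' \<diamondop> f j" using c1 by simp
      finally show ?thesis by (simp add: BM)
    next
      case True
      have j3: "j + 3 \<le> n" using less Suc True by simp
      have "B (Suc j) = f j \<diamondop> B j \<diamondop> f j" using B_Suc[of j] j3 by simp
      have M'eq: "M' = j + 1" using True by simp
      have Bsj: "B (j + 1) = f j \<diamondop> B j \<diamondop> f j" using B_Suc[of j] j3 by simp
      then have BM': "B M' = f j \<diamondop> B j \<diamondop> f j" using M'eq by simp
      have c2: "f (j+1) \<diamondop> B j = B j \<diamondop> f (j+1)" using less Suc True by (intro less.IH) auto
      have "f j \<diamondop> B M = f j \<diamondop> f (j+1) \<diamondop> f j \<diamondop> B j \<diamondop> f j \<diamondop> f (j+1)"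
        by (simp only: BM M'eq Bsj assoc)
      also have "\<dots> = f (j+1) \<diamondop> f j \<diamondop> f (j+1) \<diamondop> B j \<diamondop> f j \<diamondop> f (j+1)"
        using braid_ctx[OF j3] by simp
      also have "\<dots> = f (j+1) \<diamondop> f j \<diamondop> B j \<diamondop> f (j+1) \<diamondop> f j \<diamondop> f (j+1)"
        using c2 by (simp add: comm_ctx)
      also have "\<dots> = f (j+1) \<diamondop> f j \<diamondop> B j \<diamondop> f j \<diamondop> f (j+1) \<diamondop> f j"
        using braid[OF j3] by simp
      also have "\<dots> = B M \<diamondop> f j"
        by (simp only: BM M'eq Bsj assoc)
      finally show ?thesis .
    qed
  qed
qed

abbreviation P where "P K \<equiv> pl N n F K"
abbreviation P' where "P' K \<equiv> pr N n F K"
abbreviation Q where "Q L \<equiv> ql N n F L"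
abbreviation Q' where "Q' L \<equiv> qr N n F L"

lemma P_Suc: "m + 2 \<le> n \<Longrightarrow> P (Suc m) = f m \<diamondop> P m"
  by (simp add: pl.simps(2) emb2_embw f_def)
lemma P'_Suc: "m + 2 \<le> n \<Longrightarrow> P' (Suc m) = P' m \<diamondop> f m"
  by (simp add: pr.simps(2) emb2_embw f_def)
lemma Q_Suc: "m + 3 \<le> n \<Longrightarrow> Q (Suc m) = f (m+1) \<diamondop> Q m"
  by (simp add: ql.simps(2) emb2_embw f_def)
lemma Q'_Suc: "m + 3 \<le> n \<Longrightarrow> Q' (Suc m) = Q' m \<diamondop> f (m+1)"
  by (simp add: qr.simps(2) emb2_embw f_def)

lemma P_clean[simp]: "clean N n (P K)" by (induction K) (simp_all add: pl.simps(2))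
lemma P'_clean[simp]: "clean N n (P' K)" by (induction K) (simp_all add: pr.simps(2))
lemma Q_clean[simp]: "clean N n (Q K)" by (induction K) (simp_all add: ql.simps(2))
lemma Q'_clean[simp]: "clean N n (Q' K)" by (induction K) (simp_all add: qr.simps(2))

lemma inv_ctx: "X \<diamondop> Y = I \<Longrightarrow> clean N n Z \<Longrightarrow> X \<diamondop> (Y \<diamondop> Z) = Z"
  by (metis assoc opid_left)

lemma P'P: "K + 1 \<le> n \<Longrightarrow> P' K \<diamondop> P K = I"
proof (induction K)
  case (Suc K) then show ?case by (simp add: P_Suc P'_Suc)
qed simp

lemma PP': "K + 1 \<le> n \<Longrightarrow> P K \<diamondop> P' K = I"
proof (induction K)
  case (Suc K) then show ?case by (simp add: P_Suc P'_Suc inv_ctx)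
qed simp

lemma Q'Q: "L + 2 \<le> n \<Longrightarrow> Q' L \<diamondop> Q L = I"
proof (induction L)
  case (Suc L) then show ?case by (simp add: Q_Suc Q'_Suc)
qed simp

lemma QQ': "L + 2 \<le> n \<Longrightarrow> Q L \<diamondop> Q' L = I"
proof (induction L)
  case (Suc L) then show ?case by (simp add: Q_Suc Q'_Suc inv_ctx)
qed simp

lemma P'P_ctx[simp]: "K + 1 \<le> n \<Longrightarrow> clean N n Z \<Longrightarrow> P' K \<diamondop> (P K \<diamondop> Z) = Z"
  by (rule inv_ctx[OF P'P])
lemma PP'_ctx[simp]: "K + 1 \<le> n \<Longrightarrow> clean N n Z \<Longrightarrow> P K \<diamondop> (P' K \<diamondop> Z) = Z"
  by (rule inv_ctx[OF PP'])
lemma Q'Q_ctx[simp]: "L + 2 \<le> n \<Longrightarrow> clean N n Z \<Longrightarrow> Q' L \<diamondop> (Q L \<diamondop> Z) = Z"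
  by (rule inv_ctx[OF Q'Q])
lemma QQ'_ctx[simp]: "L + 2 \<le> n \<Longrightarrow> clean N n Z \<Longrightarrow> Q L \<diamondop> (Q' L \<diamondop> Z) = Z"
  by (rule inv_ctx[OF QQ'])

lemma conjP: "K < n \<Longrightarrow> M < n \<Longrightarrow> M \<noteq> K \<Longrightarrow> P' K \<diamondop> B M \<diamondop> P K = B (if M < K then M + 1 else M)"
proof (induction K arbitrary: M)
  case 0 then show ?case by simp
next
  case (Suc K)
  have K2: "K + 2 \<le> n" using Suc by simp
  show ?case
  proof (cases "M = K")
    case True
    have "P' (Suc K) \<diamondop> B M \<diamondop> P (Suc K) = P' K \<diamondop> (f K \<diamondop> B K \<diamondop> f K) \<diamondop> P K"
      using K2 True by (simp add: P_Suc P'_Suc)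
    also have "\<dots> = P' K \<diamondop> B (Suc K) \<diamondop> P K" using B_Suc[OF K2] by simp
    also have "\<dots> = B (Suc K)" using Suc.IH[of "Suc K"] Suc.prems by simp
    finally show ?thesis using True by simp
  next
    case False
    have c: "f K \<diamondop> B M = B M \<diamondop> f K" using False Suc.prems K2 by (intro fB_comm) auto
    have "P' (Suc K) \<diamondop> B M \<diamondop> P (Suc K) = P' K \<diamondop> (f K \<diamondop> B M) \<diamondop> f K \<diamondop> P K"
      using K2 by (simp add: P_Suc P'_Suc)
    also have "\<dots> = P' K \<diamondop> (B M \<diamondop> f K) \<diamondop> f K \<diamondop> P K" by (simp only: c)
    also have "\<dots> = P' K \<diamondop> B M \<diamondop> P K" using K2 by simp
    also have "\<dots> = B (if M < K then M + 1 else M)" using Suc.IH[of M] Suc.prems False by simp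
    finally show ?thesis using False by simp
  qed
qed

lemma conjQ: "L + 2 \<le> n \<Longrightarrow> 1 \<le> M \<Longrightarrow> M < n \<Longrightarrow> M \<noteq> L + 1 \<Longrightarrow>
   Q' L \<diamondop> B M \<diamondop> Q L = B (if M \<le> L then M + 1 else M)"
proof (induction L arbitrary: M)
  case 0 then show ?case by simp
next
  case (Suc L)
  have L3: "L + 3 \<le> n" using Suc by simp
  show ?case
  proof (cases "M = L + 1")
    case True
    have "Q' (Suc L) \<diamondop> B M \<diamondop> Q (Suc L) = Q' L \<diamondop> (f (L+1) \<diamondop> B (L+1) \<diamondop> f (L+1)) \<diamondop> Q L"
      using L3 True by (simp add: Q_Suc Q'_Suc)
    also have "\<dots> = Q' L \<diamondop> B (L + 2) \<diamondop> Q L" using B_Suc[of "L+1"] L3 by simp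
    also have "\<dots> = B (L + 2)" using Suc.IH[of "L + 2"] Suc.prems by simp
    finally show ?thesis using True by simp
  next
    case False
    have c: "f (L+1) \<diamondop> B M = B M \<diamondop> f (L+1)" using False Suc.prems L3 by (intro fB_comm) auto
    have "Q' (Suc L) \<diamondop> B M \<diamondop> Q (Suc L) = Q' L \<diamondop> (f (L+1) \<diamondop> B M) \<diamondop> f (L+1) \<diamondop> Q L"
      using L3 by (simp add: Q_Suc Q'_Suc)
    also have "\<dots> = Q' L \<diamondop> (B M \<diamondop> f (L+1)) \<diamondop> f (L+1) \<diamondop> Q L" by (simp only: c)
    also have "\<dots> = Q' L \<diamondop> B M \<diamondop> Q L" using L3 by simp
    also have "\<dots> = B (if M \<le> L then M + 1 else M)" using Suc.IH[of M] Suc.prems False by simp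
    finally show ?thesis using False by simp
  qed
qed

definition compat_n :: "op \<Rightarrow> bool" where
  "compat_n X \<longleftrightarrow> embw N n 0 2 X \<diamondop> f 1 \<diamondop> f 0 = f 1 \<diamondop> f 0 \<diamondop> embw N n 1 2 X"

lemma xB_comm:
  assumes cX: "compat_n X" and n3: "3 \<le> n" and M: "2 \<le> M" "M < n"
  shows "embw N n 0 2 X \<diamondop> B M = B M \<diamondop> embw N n 0 2 X"
  using M
proof (induction M rule: dec_induct)
  case base
  define x0 where "x0 = embw N n 0 2 X"
  define x1 where "x1 = embw N n 1 2 X"
  have cl[simp]: "clean N n x0" "clean N n x1" by (simp_all add: x0_def x1_def)
  have comp: "x0 \<diamondop> f 1 \<diamondop> f 0 = f 1 \<diamondop> f 0 \<diamondop> x1" using cX by (simp add: compat_n_def x0_def x1_def)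
  have B0: "B 0 = embw N n 0 1 (\<lambda>xs ys. A (hd xs) (hd ys))" using n3 by (simp add: emb1_embw)
  have B2: "B 2 = f 1 \<diamondop> f 0 \<diamondop> B 0 \<diamondop> f 0 \<diamondop> f 1"
    using B_Suc[of 0] B_Suc[of 1] n3 by (simp add: numeral_2_eq_2)
  have c1: "x1 \<diamondop> B 0 = B 0 \<diamondop> x1" unfolding B0 x1_def using n3 by (intro embw_comm) auto
  have "f 0 \<diamondop> f 1 \<diamondop> (x0 \<diamondop> f 1 \<diamondop> f 0) \<diamondop> f 0 \<diamondop> f 1 = f 0 \<diamondop> f 1 \<diamondop> (f 1 \<diamondop> f 0 \<diamondop> x1) \<diamondop> f 0 \<diamondop> f 1"
    by (simp only: comp)
  then have c2: "f 0 \<diamondop> f 1 \<diamondop> x0 = x1 \<diamondop> f 0 \<diamondop> f 1" using n3 by simp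
  have "x0 \<diamondop> B 2 = (x0 \<diamondop> f 1 \<diamondop> f 0) \<diamondop> B 0 \<diamondop> f 0 \<diamondop> f 1" by (simp add: B2)
  also have "\<dots> = f 1 \<diamondop> f 0 \<diamondop> (x1 \<diamondop> B 0) \<diamondop> f 0 \<diamondop> f 1" by (simp only: comp assoc)
  also have "\<dots> = f 1 \<diamondop> f 0 \<diamondop> B 0 \<diamondop> (x1 \<diamondop> f 0 \<diamondop> f 1)" by (simp only: c1 assoc)
  also have "\<dots> = f 1 \<diamondop> f 0 \<diamondop> B 0 \<diamondop> (f 0 \<diamondop> f 1 \<diamondop> x0)" by (simp only: c2)
  also have "\<dots> = B 2 \<diamondop> x0" by (simp add: B2)
  finally show ?case by (simp add: x0_def)
next
  case (step M)
  have M2: "M + 2 \<le> n" using step by simp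
  have c: "embw N n 0 2 X \<diamondop> f M = f M \<diamondop> embw N n 0 2 X" unfolding f_def using step M2 by (intro embw_comm) auto
  have IH: "embw N n 0 2 X \<diamondop> B M = B M \<diamondop> embw N n 0 2 X" using step by simp
  have "embw N n 0 2 X \<diamondop> B (Suc M) = (embw N n 0 2 X \<diamondop> f M) \<diamondop> B M \<diamondop> f M" by (simp add: B_Suc[OF M2])
  also have "\<dots> = f M \<diamondop> (embw N n 0 2 X \<diamondop> B M) \<diamondop> f M" by (simp add: c)
  also have "\<dots> = f M \<diamondop> B M \<diamondop> (embw N n 0 2 X \<diamondop> f M)" by (simp only: IH assoc)
  also have "\<dots> = B (Suc M) \<diamondop> embw N n 0 2 X" by (simp only: c B_Suc[OF M2] assoc)
  finally show ?case .
qed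

end

context algA begin

lemma main_comm:
  assumes cX: "compat_n X" and kl: "1 \<le> k" "k < l" "l \<le> n" and m: "1 \<le> m" "m \<le> n" "m \<noteq> k" "m \<noteq> l"
  shows "xbar N n F X k l \<diamondop> B (m - 1) = B (m - 1) \<diamondop> xbar N n F X k l"
proof -
  define K where "K = k - 1"
  define L where "L = l - 2"
  define M where "M = m - 1"
  define M' where "M' = (if M < K then M + 1 else M)"
  define M'' where "M'' = (if M' \<le> L then M' + 1 else M')"
  define x0 where "x0 = embw N n 0 2 X"
  have n3: "3 \<le> n" using kl m by auto
  have K: "K + 1 \<le> n" "K < n" using kl by (auto simp: K_def)
  have L: "L + 2 \<le> n" using kl by (auto simp: L_def)
  have MK: "M < n" "M \<noteq> K" using m kl by (auto simp: M_def K_def)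
  have M'1: "1 \<le> M'" "M' < n" "M' \<noteq> L + 1" using m kl MK by (auto simp: M'_def M_def K_def L_def)
  have M''2: "2 \<le> M''" "M'' < n" using M'1 L kl by (auto simp: M''_def L_def)
  have xb: "xbar N n F X k l = P K \<diamondop> Q L \<diamondop> x0 \<diamondop> Q' L \<diamondop> P' K"
    using kl by (simp add: xbar_def K_def L_def x0_def emb2_embw)
  have C: "Q' L \<diamondop> P' K \<diamondop> B M \<diamondop> P K \<diamondop> Q L = B M''"
  proof -
    have "Q' L \<diamondop> P' K \<diamondop> B M \<diamondop> P K \<diamondop> Q L = Q' L \<diamondop> (P' K \<diamondop> B M \<diamondop> P K) \<diamondop> Q L" by simp
    also have "\<dots> = Q' L \<diamondop> B M' \<diamondop> Q L" using conjP[OF K(2) MK] by (simp add: M'_def)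
    also have "\<dots> = B M''" using conjQ[OF L M'1] by (simp add: M''_def)
    finally show ?thesis .
  qed
  have Beq: "B M = P K \<diamondop> Q L \<diamondop> B M'' \<diamondop> Q' L \<diamondop> P' K"
    using K L by (simp add: PP' QQ' flip: C)
  have xC: "x0 \<diamondop> B M'' = B M'' \<diamondop> x0" unfolding x0_def using xB_comm[OF cX n3 M''2] .
  have "xbar N n F X k l \<diamondop> B M = xbar N n F X k l \<diamondop> (P K \<diamondop> Q L \<diamondop> B M'' \<diamondop> Q' L \<diamondop> P' K)"
    by (rule arg_cong[OF Beq])
  also have "\<dots> = P K \<diamondop> Q L \<diamondop> (x0 \<diamondop> B M'') \<diamondop> Q' L \<diamondop> P' K"
    using K L by (simp add: xb x0_def)
  also have "\<dots> = P K \<diamondop> Q L \<diamondop> B M'' \<diamondop> (x0 \<diamondop> Q' L \<diamondop> P' K)"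
    by (simp only: xC assoc)
  also have "\<dots> = (P K \<diamondop> Q L \<diamondop> B M'' \<diamondop> Q' L \<diamondop> P' K) \<diamondop> xbar N n F X k l"
    using K L by (simp add: xb x0_def)
  also have "\<dots> = B M \<diamondop> xbar N n F X k l"
    by (rule arg_cong[OF Beq[symmetric]])
  finally show ?thesis by (simp add: M_def)
qed

end

lemma bigo_cmult_right: "f \<in> O[F](g) \<Longrightarrow> (\<lambda>x. f x * (c::complex)) \<in> O[F](g)"
  by (cases "c = 0") simp_all

lemma zero_from_bigo:
  assumes "(\<lambda>h::complex. h * c) \<in> O[at 0](\<lambda>h. h ^ 2)"
  shows "c = 0"
proof -
  obtain C where C: "C > 0" and ev: "eventually (\<lambda>h. norm (h * c) \<le> C * norm (h ^ 2)) (at (0::complex))"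
    using assms by (elim landau_o.bigE)
  have ev0: "eventually (\<lambda>h::complex. h \<noteq> 0) (at 0)" by (simp add: eventually_at_filter)
  have "eventually (\<lambda>h::complex. norm c \<le> C * norm h) (at 0)"
    using ev ev0
  proof eventually_elim
    case (elim h)
    then have "norm h * norm c \<le> norm h * (C * norm h)"
      by (simp add: norm_mult norm_power power2_eq_square mult_ac)
    then show ?case using elim(2) by simp
  qed
  moreover have "((\<lambda>h::complex. C * norm h) \<longlongrightarrow> 0) (at 0)"
    by (rule tendsto_eq_intros refl)+ simp
  ultimately have "norm c \<le> 0"
    using tendsto_lowerbound[of "\<lambda>h::complex. C * norm h" 0 "at 0" "norm c"] by auto
  then show ?thesis by simp
qed

context algA begin

lemma compat_F: "3 \<le> n \<Longrightarrow> compat_n F"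
  using braid[of 0] by (simp add: compat_n_def f_def numeral_2_eq_2)

lemma compat_add: "compat_n X \<Longrightarrow> compat_n Y \<Longrightarrow> compat_n (opadd X Y)"
  unfolding compat_n_def embw_add opmul_add_left opmul_add_right opmul_assoc by simp

lemma compat_smul: "compat_n X \<Longrightarrow> compat_n (opsmul c X)"
  unfolding compat_n_def embw_smul opmul_smul_left opmul_smul_right opmul_assoc by simp

lemma compat_FXF:
  assumes cX: "compat_n X" and n3: "3 \<le> n"
  shows "compat_n (opmul N 2 (opmul N 2 F X) F)"
proof -
  define x0 where "x0 = embw N n 0 2 X"
  define x1 where "x1 = embw N n 1 2 X"
  have cl[simp]: "clean N n x0" "clean N n x1" by (simp_all add: x0_def x1_def)
  have comp: "x0 \<diamondop> f 1 \<diamondop> f 0 = f 1 \<diamondop> f 0 \<diamondop> x1" using cX by (simp add: compat_n_def x0_def x1_def)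
  have y0: "embw N n 0 2 (opmul N 2 (opmul N 2 F X) F) = f 0 \<diamondop> x0 \<diamondop> f 0"
    using n3 by (simp add: embw_mult f_def x0_def)
  have y1: "embw N n 1 2 (opmul N 2 (opmul N 2 F X) F) = f 1 \<diamondop> x1 \<diamondop> f 1"
    using n3 by (simp add: embw_mult f_def x1_def)
  have b: "f 0 \<diamondop> f 1 \<diamondop> f 0 = f 1 \<diamondop> f 0 \<diamondop> f 1" using braid[of 0] n3 by simp
  have "(f 0 \<diamondop> x0 \<diamondop> f 0) \<diamondop> f 1 \<diamondop> f 0 = f 0 \<diamondop> x0 \<diamondop> (f 0 \<diamondop> f 1 \<diamondop> f 0)" by simp
  also have "\<dots> = f 0 \<diamondop> (x0 \<diamondop> f 1 \<diamondop> f 0) \<diamondop> f 1" by (simp only: b assoc)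
  also have "\<dots> = (f 0 \<diamondop> f 1 \<diamondop> f 0) \<diamondop> x1 \<diamondop> f 1" by (simp only: comp assoc)
  also have "\<dots> = f 1 \<diamondop> f 0 \<diamondop> (f 1 \<diamondop> x1 \<diamondop> f 1)" by (simp only: b assoc)
  finally show ?thesis unfolding compat_n_def y0 y1 by simp
qed

lemma compat_RF:
  assumes n3: "3 \<le> n" and R: "compatible N R F \<or> opeq N 2 R F"
  shows "compat_n (opmul N 2 R F)"
  using R
proof
  assume "opeq N 2 R F"
  then have "embw N n p 2 R = f p" if "p \<le> 1" for p unfolding f_def by (rule embw_cong) (use n3 that in simp)
  then show ?thesis using n3 by (simp add: compat_n_def embw_mult f_def[symmetric])
next
  assume c: "compatible N R F"
  define r0 where "r0 = embw N n 0 2 R"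
  define r1 where "r1 = embw N n 1 2 R"
  have cl[simp]: "clean N n r0" "clean N n r1" by (simp_all add: r0_def r1_def)
  have c3: "opeq N 3 (opmul N 3 (opmul N 3 (emb2 N 3 1 R) (emb2 N 3 2 F)) (emb2 N 3 1 F))
              (opmul N 3 (opmul N 3 (emb2 N 3 2 F) (emb2 N 3 1 F)) (emb2 N 3 2 R))"
    using c by (simp add: compatible_def)
  have n03: "0 + 3 \<le> n" using n3 by simp
  have "opmul N n (opmul N n (embw N n (0+1-1) 2 R) (embw N n (0+2-1) 2 F)) (embw N n (0+1-1) 2 F)
       = opmul N n (opmul N n (embw N n (0+2-1) 2 F) (embw N n (0+1-1) 2 F)) (embw N n (0+2-1) 2 R)"
    by (rule lift3[OF c3 _ _ _ _ _ _ n03]) simp_all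
  then
  have comp: "r0 \<diamondop> f 1 \<diamondop> f 0 = f 1 \<diamondop> f 0 \<diamondop> r1" by (simp add: f_def r0_def r1_def)
  have b: "f 0 \<diamondop> f 1 \<diamondop> f 0 = f 1 \<diamondop> f 0 \<diamondop> f 1" using braid[of 0] n3 by simp
  have z0: "embw N n 0 2 (opmul N 2 R F) = r0 \<diamondop> f 0" using n3 by (simp add: embw_mult f_def r0_def)
  have z1: "embw N n 1 2 (opmul N 2 R F) = r1 \<diamondop> f 1" using n3 by (simp add: embw_mult f_def r1_def)
  have "(r0 \<diamondop> f 0) \<diamondop> f 1 \<diamondop> f 0 = r0 \<diamondop> (f 0 \<diamondop> f 1 \<diamondop> f 0)" by simp
  also have "\<dots> = (r0 \<diamondop> f 1 \<diamondop> f 0) \<diamondop> f 1" by (simp only: b assoc)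
  also have "\<dots> = f 1 \<diamondop> f 0 \<diamondop> (r1 \<diamondop> f 1)" by (simp only: comp assoc)
  finally show ?thesis unfolding compat_n_def z0 z1 by simp
qed

end

lemma bigo_cmult_left: "f \<in> O[F](g) \<Longrightarrow> (\<lambda>x. (c::complex) * f x) \<in> O[F](g)"
  by (cases "c = 0") simp_all

context algA begin

definition G where "G = f 1 \<diamondop> f 0"
definition Dop :: "op \<Rightarrow> nat list \<Rightarrow> nat list \<Rightarrow> complex" where
  "Dop Z a b = (embw N n 0 2 Z \<diamondop> G) a b - (G \<diamondop> embw N n 1 2 Z) a b"

lemma compat_Dop: "(\<forall>a b. Dop Z a b = 0) \<Longrightarrow> compat_n Z"
  unfolding compat_n_def Dop_def G_def by (auto intro!: ext simp flip: assoc)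

lemma Dop_add: "Dop (opadd X Y) a b = Dop X a b + Dop Y a b"
  unfolding Dop_def embw_add opmul_add_left opmul_add_right by (simp add: opadd_def)

lemma Dop_smul: "Dop (opsmul c X) a b = c * Dop X a b"
  unfolding Dop_def embw_smul opmul_smul_left opmul_smul_right by (simp add: opsmul_def algebra_simps)

lemma Dop_id: "3 \<le> n \<Longrightarrow> Dop (opid N 2) a b = 0"
  unfolding Dop_def by (simp add: embw_id G_def)

lemma embw_bigo:
  assumes "\<And>c d. c \<in> midx N 2 \<Longrightarrow> d \<in> midx N 2 \<Longrightarrow> (\<lambda>h. E h c d) \<in> O[at (0::complex)](\<lambda>h. h ^ 2)"
    and "p + 2 \<le> n"
  shows "(\<lambda>h. embw N n p 2 (E h) a x) \<in> O[at 0](\<lambda>h. h ^ 2)"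
proof (cases "a \<in> midx N n \<and> x \<in> midx N n \<and> agr n p 2 a x")
  case True
  then show ?thesis using assms sub_midx[of a N n p 2] sub_midx[of x N n p 2] by (simp add: embw_def)
next
  case False
  then have "(\<lambda>h. embw N n p 2 (E h) a x) = (\<lambda>h. 0)" by (auto simp: embw_def)
  then show ?thesis by simp
qed

lemma Dop_bigo:
  assumes "\<And>c d. c \<in> midx N 2 \<Longrightarrow> d \<in> midx N 2 \<Longrightarrow> (\<lambda>h. E h c d) \<in> O[at (0::complex)](\<lambda>h. h ^ 2)"
    and n3: "3 \<le> n"
  shows "(\<lambda>h. Dop (E h) a b) \<in> O[at 0](\<lambda>h. h ^ 2)"
proof -
  have 1: "(\<lambda>h. (embw N n 0 2 (E h) \<diamondop> G) a b) \<in> O[at 0](\<lambda>h. h ^ 2)"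
    unfolding opmul_def
    by (intro big_sum_in_bigo bigo_cmult_right embw_bigo[OF assms(1)]) (use n3 in auto)
  have 2: "(\<lambda>h. (G \<diamondop> embw N n 1 2 (E h)) a b) \<in> O[at 0](\<lambda>h. h ^ 2)"
    unfolding opmul_def
    by (intro big_sum_in_bigo bigo_cmult_left embw_bigo[OF assms(1)]) (use n3 in auto)
  show ?thesis unfolding Dop_def using sum_in_bigo(2)[OF 1 2] .
qed

lemma compat_rm:
  assumes n3: "3 \<le> n" and e: "e > 0"
    and hyp: "\<forall>q\<in>ball 1 e - {-1, 0, 1}. hecke_symmetry N q (Rq q) \<and> compatible N (Rq q) F"
    and R1: "opeq N 2 (Rq 1) F"
    and O: "\<forall>a\<in>midx N 2. \<forall>b\<in>midx N 2.
                 (\<lambda>h::complex. opmul N 2 (Rq (exp h)) F a b - (opid N 2 a b + h * rm a b))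
                   \<in> O[at 0](\<lambda>h. h ^ 2)"
  shows "compat_n rm"
proof (rule compat_Dop, intro allI)
  fix a b
  define Z where "Z h = opmul N 2 (Rq (exp h)) F" for h
  define E where "E h = (\<lambda>c d. Z h c d - (opid N 2 c d + h * rm c d))" for h
  have ZE: "Z h = opadd (opadd (opid N 2) (opsmul h rm)) (E h)" for h
    by (auto simp: E_def opadd_def opsmul_def intro!: ext)
  have DZ: "Dop (Z h) a b = h * Dop rm a b + Dop (E h) a b" for h
    unfolding ZE Dop_add Dop_smul Dop_id[OF n3] by simp
  have "((\<lambda>h. exp h) \<longlongrightarrow> exp 0) (at (0::complex))"
    by (intro tendsto_intros)
  then have "eventually (\<lambda>h. dist (exp h) 1 < min e 1) (at (0::complex))"
    using e by (intro tendstoD) auto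
  then have ev: "eventually (\<lambda>h. Dop (Z h) a b = 0) (at (0::complex))"
  proof eventually_elim
    case (elim h)
    define q where "q = exp h"
    have d: "dist q 1 < e" "dist q 1 < 1" using elim by (auto simp: q_def)
    have "q \<noteq> 0" using d(2) by auto
    moreover have "q \<noteq> -1" using d(2) by (auto simp: dist_norm)
    ultimately have "compatible N (Rq q) F \<or> opeq N 2 (Rq q) F"
      using hyp d R1 by (cases "q = 1") (auto simp: dist_commute)
    then have "compat_n (Z h)" unfolding Z_def q_def[symmetric] by (rule compat_RF[OF n3])
    then show ?case unfolding compat_n_def Dop_def G_def by (simp flip: assoc)
  qed
  have "(\<lambda>h. Dop (E h) a b) \<in> O[at 0](\<lambda>h. h ^ 2)"
    by (rule Dop_bigo[OF _ n3]) (use O in \<open>simp add: E_def Z_def\<close>)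
  then have "(\<lambda>h. - (h * Dop rm a b)) \<in> O[at 0](\<lambda>h. h ^ 2)"
    by (rule landau_o.big.in_cong[THEN iffD1, rotated])
       (use ev in \<open>auto elim!: eventually_mono simp: DZ add_eq_0_iff\<close>)
  then have "(\<lambda>h. h * Dop rm a b) \<in> O[at 0](\<lambda>h. h ^ 2)" by simp
  then show "Dop rm a b = 0" by (rule zero_from_bigo)
qed

end

theorem mainTheorem4:
  fixes N n i j k :: nat and F :: op and A :: "nat \<Rightarrow> nat \<Rightarrow> complex"
    and u v :: complex and rr :: "complex \<Rightarrow> complex \<Rightarrow> op"
  assumes F: "involutive_symmetry N F"
    and rcases:
      "(\<exists>R. braiding N R \<and> compatible N R F \<and> rr = (\<lambda>u v. opsmul (1 / (u - v)) F))
       \<or> (\<exists>Rq rm e. e > 0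
            \<and> (\<forall>a\<in>midx N 2. \<forall>b\<in>midx N 2. (\<lambda>q. Rq q a b) analytic_on ball 1 e)
            \<and> (\<forall>q\<in>ball 1 e - {-1, 0, 1}. hecke_symmetry N q (Rq q) \<and> compatible N (Rq q) F)
            \<and> opeq N 2 (Rq 1) F
            \<and> (\<forall>a\<in>midx N 2. \<forall>b\<in>midx N 2.
                 (\<lambda>h::complex. opmul N 2 (Rq (exp h)) F a b - (opid N 2 a b + h * rm a b))
                   \<in> O[at 0](\<lambda>h. h ^ 2))
            \<and> rr = (\<lambda>u v. opadd (opsmul (u / (u - v)) F) (opsmul (- 1 / 2) rm)))"
    and uv: "u \<noteq> v"
    and pos: "0 < i" "0 < j" "0 < k"
    and dist: "i \<noteq> j" "i \<noteq> k" "j \<noteq> k"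
    and le: "i \<le> n" "j \<le> n" "k \<le> n"
  shows "opeq N n (opmul N n (ovl2 N n F (rr u v) i j) (ovl1 N n F A k))
                  (opmul N n (ovl1 N n F A k) (ovl2 N n F (rr u v) i j))"
proof -
  interpret algA N n F A by unfold_locales (rule F)
  have n3: "3 \<le> n" using pos dist le by auto
  have cX: "compat_n (rr u v)"
    using rcases
  proof
    assume "\<exists>R. braiding N R \<and> compatible N R F \<and> rr = (\<lambda>u v. opsmul (1 / (u - v)) F)"
    then have "rr u v = opsmul (1 / (u - v)) F" by auto
    then show ?thesis using compat_smul compat_F n3 by simp
  next
    assume "\<exists>Rq rm e. e > 0
            \<and> (\<forall>a\<in>midx N 2. \<forall>b\<in>midx N 2. (\<lambda>q. Rq q a b) analytic_on ball 1 e)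
            \<and> (\<forall>q\<in>ball 1 e - {-1, 0, 1}. hecke_symmetry N q (Rq q) \<and> compatible N (Rq q) F)
            \<and> opeq N 2 (Rq 1) F
            \<and> (\<forall>a\<in>midx N 2. \<forall>b\<in>midx N 2.
                 (\<lambda>h::complex. opmul N 2 (Rq (exp h)) F a b - (opid N 2 a b + h * rm a b))
                   \<in> O[at 0](\<lambda>h. h ^ 2))
            \<and> rr = (\<lambda>u v. opadd (opsmul (u / (u - v)) F) (opsmul (- 1 / 2) rm))"
    then obtain Rq rm e where e: "e > 0"
      and hyp: "\<forall>q\<in>ball 1 e - {-1, 0, 1}. hecke_symmetry N q (Rq q) \<and> compatible N (Rq q) F"
      and R1: "opeq N 2 (Rq 1) F"
      and O: "\<forall>a\<in>midx N 2. \<forall>b\<in>midx N 2.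
                 (\<lambda>h::complex. opmul N 2 (Rq (exp h)) F a b - (opid N 2 a b + h * rm a b))
                   \<in> O[at 0](\<lambda>h. h ^ 2)"
      and rr: "rr = (\<lambda>u v. opadd (opsmul (u / (u - v)) F) (opsmul (- 1 / 2) rm))"
      by blast
    have "compat_n rm" by (rule compat_rm[OF n3 e hyp R1 O])
    then show ?thesis unfolding rr using compat_F[OF n3] by (intro compat_add compat_smul)
  qed
  have ov1: "ovl1 N n F A k = B (k - 1)" by (simp add: ovl1_def)
  show ?thesis
  proof (cases "i < j")
    case True
    have "xbar N n F (rr u v) i j \<diamondop> B (k - 1) = B (k - 1) \<diamondop> xbar N n F (rr u v) i j"
      by (rule main_comm[OF cX]) (use True pos dist le in auto)
    then show ?thesis using True by (simp add: ovl2_def ov1 eq_opeq)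
  next
    case False
    then have ji: "j < i" using dist by simp
    have "xbar N n F (opmul N 2 (opmul N 2 F (rr u v)) F) j i \<diamondop> B (k - 1)
        = B (k - 1) \<diamondop> xbar N n F (opmul N 2 (opmul N 2 F (rr u v)) F) j i"
      by (rule main_comm[OF compat_FXF[OF cX n3]]) (use ji pos dist le in auto)
    then show ?thesis using False by (simp add: ovl2_def ov1 eq_opeq)
  qed
qed

end
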